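(* Consider the single-path uplink system and problem in the context (antenna-moving-region constraints omitted), and assume $K(K-1)/2\le I_M+I_N$. Let $\mathcal{P}_1,\mathcal{P}_2$ be any partition of $\mathcal{P}=\{(k,q):1\le k<q\le K\}$ with $|\mathcal{P}_1|\le I_M$ and $|\mathcal{P}_2|\le I_N$, with elements enumerated as $\mathcal{P}_1=\{(k_1^{(i)},q_1^{(i)})\}_{i=1}^{|\mathcal{P}_1|}$ and $\mathcal{P}_2=\{(k_2^{(i)},q_2^{(i)})\}_{i=1}^{|\mathcal{P}_2|}$. Define $\mathbf{d}_x\in\mathbb{R}^{I_M}$ and $\mathbf{d}_y\in\mathbb{R}^{I_N}$ recursively by $$[\mathbf{d}_x]_i=\begin{cases}\dfrac{(\rho_i+1/m_i)\lambda}{|\vartheta_{k_1^{(i)}}-\vartheta_{q_1^{(i)}}|}, & 1\le i\le|\mathcal{P}_1|,\\[2mm] \sum_{j=1}^{i-1}(m_j-1)[\mathbf{d}_x]_j+d_{\min,x}, & |\mathcal{P}_1|+1\le i\le I_M,\end{cases}$$ $$[\mathbf{d}_y]_i=\begin{cases}\dfrac{(\tau_i+1/n_i)\lambda}{|\varphi_{k_2^{(i)}}-\varphi_{q_2^{(i)}}|}, & 1\le i\le|\mathcal{P}_2|,\\[2mm] \sum_{j=1}^{i-1}(n_j-1)[\mathbf{d}_y]_j+d_{\min,y}, & |\mathcal{P}_2|+1\le i\le I_N,\end{cases}$$ where $\rho_i$ is the smallest nonnegative integer such that $[\mathbf{d}_x]_i\ge\sum_{j=1}^{i-1}(m_j-1)[\mathbf{d}_x]_j+d_{\min,x}$,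 and $\tau_i$ is the smallest nonnegative integer such that $[\mathbf{d}_y]_i\ge\sum_{j=1}^{i-1}(n_j-1)[\mathbf{d}_y]_j+d_{\min,y}$. Then $\mathbf{x}^\star=\mathbf{U}^{\mathrm T}\mathbf{d}_x$ and $\mathbf{y}^\star=\mathbf{V}^{\mathrm T}\mathbf{d}_y$ are optimal APVs for the problem: there exist $\mathbf{W}$ and $\mathbf{p}$ such that $(\mathbf{x}^\star,\mathbf{y}^\star,\mathbf{W},\mathbf{p})$ is an optimal solution, attaining total transmit power $\sum_{k=1}^K\frac{\sigma^2(2^{r_k}-1)}{MN|b_k|^2}$.
   Context: A base station has a cross-linked movable antenna array with $M$ columns and $N$ rows; horizontal APV $\mathbf{x}=[x_1,\dots,x_M]^{\mathrm T}\in\mathbb{R}^M$, vertical APV $\mathbf{y}=[y_1,\dots,y_N]^{\mathrm T}\in\mathbb{R}^N$, antenna $(m,n)$ at $(x_m,y_n)$. $K$ single-antenna users; user $k$ has a single path with coefficient $b_k\ne0$ and virtual angles $\vartheta_k,\varphi_k\in[-1,1]$, with $\vartheta_k\ne\vartheta_q$ and $\varphi_k\ne\varphi_q$ for $k\ne q$. With wavelength $\lambda>0$, $\mathbf{h}_k(\mathbf{x},\mathbf{y})=b_k\,\mathbf{a}^{\mathrm{hor}}_k(\mathbf{x})\otimes\mathbf{a}^{\mathrm{ver}}_k(\mathbf{y})$, $\mathbf{a}^{\mathrm{hor}}_k(\mathbf{x})=[e^{-\mathrm{j}\frac{2\pi}{\lambda}x_m\vartheta_k}]_{m=1}^M$,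 $\mathbf{a}^{\mathrm{ver}}_k(\mathbf{y})=[e^{-\mathrm{j}\frac{2\pi}{\lambda}y_n\varphi_k}]_{n=1}^N$. With combining matrix $\mathbf{W}=[\mathbf{w}_1,\dots,\mathbf{w}_K]\in\mathbb{C}^{MN\times K}$, powers $p_k$, noise power $\sigma^2>0$, SINR $\gamma_k=\frac{|\mathbf{w}_k^{\mathrm H}\mathbf{h}_k|^2p_k}{\sum_{q\ne k}|\mathbf{w}_k^{\mathrm H}\mathbf{h}_q|^2p_q+\|\mathbf{w}_k\|_2^2\sigma^2}$. The problem: minimize $\sum_k p_k$ over $\mathbf{x},\mathbf{y},\mathbf{W},\mathbf{p}$ subject to $\log_2(1+\gamma_k)\ge r_k$, $p_k\ge0$ (given $r_k\ge0$), $x_{m+1}-x_m\ge d_{\min,x}$ ($1\le m\le M-1$), $y_{n+1}-y_n\ge d_{\min,y}$ ($1\le n\le N-1$), given $d_{\min,x},d_{\min,y}>0$ (no bounds on the moving region). Factorization notation: write $M=\prod_{i=1}^{I_M}m_i$ with primes $m_1\le\dots\le m_{I_M}$ ($I_M$ = number of prime factors with multiplicity); set $M_1=1$, $M_i=\prod_{j=1}^{i-1}m_j$ ($2\le i\le I_M$), $\mathbf{m}=[M_1,\dots,M_{I_M}]^{\mathrm T}$. Each integer $1\le m\le M$ is written uniquely as $m=\mathbf{u}_m^{\mathrm T}\mathbf{m}+1$ with $\mathbf{u}_m\in\mathbb{Z}^{I_M}$, $0\le[\mathbf{u}_m]_i<m_i$ (mixed-radix digits of $m-1$); $\mathbf{U}=[\mathbf{u}_1,\dots,\mathbf{u}_M]\in\mathbb{Z}^{I_M\times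 M}$. Analogously $N=\prod_{i=1}^{I_N}n_i$ with primes $n_1\le\dots\le n_{I_N}$, $N_1=1$, $N_i=\prod_{j=1}^{i-1}n_j$, $\mathbf{n}=[N_1,\dots,N_{I_N}]^{\mathrm T}$, $n=\mathbf{v}_n^{\mathrm T}\mathbf{n}+1$ with $0\le[\mathbf{v}_n]_i<n_i$, $\mathbf{V}=[\mathbf{v}_1,\dots,\mathbf{v}_N]\in\mathbb{Z}^{I_N\times N}$. *)

theory Defs
  imports Complex_Main "HOL-Computational_Algebra.Primes" "HOL-Library.Multiset"
begin

(* Conventions: antennas, users and factor positions are 0-indexed.
   Antenna column m (0 \<le> m < M) corresponds to the paper's m+1;
   user k (0 \<le> k < K) to the paper's k+1; factor position i (0 \<le> i < I_M)
   to the paper's i+1. *)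

(* prime factors m_1 \<le> ... \<le> m_{I_M} of M, as a sorted list (length = I_M) *)
definition primes_sorted :: "nat \<Rightarrow> nat list" where
  "primes_sorted M = sorted_list_of_multiset (prime_factorization M)"

definition radix_base :: "nat list \<Rightarrow> nat \<Rightarrow> nat" where
  "radix_base ms i = (\<Prod>j<i. ms ! j)"

(* [u_{m+1}]_{i+1}: mixed-radix digit i of m (m = paper's m-1) *)
definition digit :: "nat list \<Rightarrow> nat \<Rightarrow> nat \<Rightarrow> nat" where
  "digit ms m i = (m div radix_base ms i) mod (ms ! i)"

(* recursive construction of the first i entries of d_x (resp. d_y).
   ms: prime factor list, delta j = |theta_k - theta_q| for the j-th pair of P_1,
   P = |P_1|, lam = wavelength, dmin = minimum spacing *)
fun dlist :: "nat list \<Rightarrow> (nat \<Rightarrow> real) \<Rightarrow> nat \<Rightarrow> real \<Rightarrow> real \<Rightarrow> nat \<Rightarrow> real list" where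
  "dlist ms delta P lam dmin 0 = []"
| "dlist ms delta P lam dmin (Suc i) =
     (let ds = dlist ms delta P lam dmin i;
          S = (\<Sum>j<i. real (ms ! j - 1) * ds ! j) + dmin
      in ds @ [if i < P
               then (real (LEAST rho::nat. (real rho + 1 / real (ms ! i)) * lam / delta i \<ge> S)
                       + 1 / real (ms ! i)) * lam / delta i
               else S])"

definition dvec :: "nat list \<Rightarrow> (nat \<Rightarrow> real) \<Rightarrow> nat \<Rightarrow> real \<Rightarrow> real \<Rightarrow> nat \<Rightarrow> real" where
  "dvec ms delta P lam dmin i = dlist ms delta P lam dmin (Suc i) ! i"

(* x* = U^T d_x : entry m is sum_i [u_m]_i [d_x]_i *)
definition apv :: "nat list \<Rightarrow> (nat \<Rightarrow> real) \<Rightarrow> nat \<Rightarrow> real" where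
  "apv ms d m = (\<Sum>i<length ms. real (digit ms m i) * d i)"

(* channel of a user: entry (m,n) of b * a_hor(x) \<otimes> a_ver(y) *)
definition chan :: "real \<Rightarrow> complex \<Rightarrow> real \<Rightarrow> real \<Rightarrow> (nat \<Rightarrow> real) \<Rightarrow> (nat \<Rightarrow> real)
                      \<Rightarrow> nat \<times> nat \<Rightarrow> complex" where
  "chan lam b th ph x y = (\<lambda>(m, n).
      b * exp (- \<i> * complex_of_real (2 * pi / lam * x m * th))
        * exp (- \<i> * complex_of_real (2 * pi / lam * y n * ph)))"

definition cinner :: "nat \<Rightarrow> nat \<Rightarrow> (nat \<times> nat \<Rightarrow> complex) \<Rightarrow> (nat \<times> nat \<Rightarrow> complex) \<Rightarrow> complex" where
  "cinner M N w h = (\<Sum>m<M. \<Sum>n<N. cnj (w (m, n)) * h (m, n))"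

definition cnormsq :: "nat \<Rightarrow> nat \<Rightarrow> (nat \<times> nat \<Rightarrow> complex) \<Rightarrow> real" where
  "cnormsq M N w = (\<Sum>m<M. \<Sum>n<N. (cmod (w (m, n)))\<^sup>2)"

definition sinr :: "nat \<Rightarrow> nat \<Rightarrow> nat \<Rightarrow> real \<Rightarrow> (nat \<Rightarrow> complex) \<Rightarrow> (nat \<Rightarrow> real)
     \<Rightarrow> (nat \<Rightarrow> real) \<Rightarrow> real \<Rightarrow> (nat \<Rightarrow> real) \<Rightarrow> (nat \<Rightarrow> real)
     \<Rightarrow> (nat \<Rightarrow> nat \<times> nat \<Rightarrow> complex) \<Rightarrow> (nat \<Rightarrow> real) \<Rightarrow> nat \<Rightarrow> real" where
  "sinr M N K lam b th ph sigma2 x y W p k =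
     (cmod (cinner M N (W k) (chan lam (b k) (th k) (ph k) x y)))\<^sup>2 * p k /
     ((\<Sum>q\<in>{..<K} - {k}. (cmod (cinner M N (W k) (chan lam (b q) (th q) (ph q) x y)))\<^sup>2 * p q)
      + cnormsq M N (W k) * sigma2)"

definition feasible :: "nat \<Rightarrow> nat \<Rightarrow> nat \<Rightarrow> real \<Rightarrow> (nat \<Rightarrow> complex) \<Rightarrow> (nat \<Rightarrow> real)
     \<Rightarrow> (nat \<Rightarrow> real) \<Rightarrow> real \<Rightarrow> (nat \<Rightarrow> real) \<Rightarrow> real \<Rightarrow> real
     \<Rightarrow> (nat \<Rightarrow> real) \<Rightarrow> (nat \<Rightarrow> real)
     \<Rightarrow> (nat \<Rightarrow> nat \<times> nat \<Rightarrow> complex) \<Rightarrow> (nat \<Rightarrow> real) \<Rightarrow> bool" where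
  "feasible M N K lam b th ph sigma2 r dminx dminy x y W p \<longleftrightarrow>
     (\<forall>k<K. p k \<ge> 0 \<and> log 2 (1 + sinr M N K lam b th ph sigma2 x y W p k) \<ge> r k)
     \<and> (\<forall>m. Suc m < M \<longrightarrow> x (Suc m) - x m \<ge> dminx)
     \<and> (\<forall>n. Suc n < N \<longrightarrow> y (Suc n) - y n \<ge> dminy)"

end

theory Submission
  imports Defs "HOL-Analysis.Analysis"
begin

lemma rb_Suc: "radix_base ms (Suc j) = radix_base ms j * ms ! j"
  by (simp add: radix_base_def)

lemma rb_pos: assumes "\<forall>x\<in>set ms. x > 0" "j \<le> length ms" shows "radix_base ms j > 0"
  using assms unfolding radix_base_def by (auto intro!: prod_pos)

lemma rb_dvd: assumes "i \<le> j" shows "radix_base ms i dvd radix_base ms j"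
  unfolding radix_base_def using assms by (intro prod_dvd_prod_subset) auto

lemma rb_len: "radix_base ms (length ms) = prod_list ms"
proof (induction ms rule: rev_induct)
  case Nil thus ?case by (simp add: radix_base_def)
next
  case (snoc x xs)
  have "radix_base (xs @ [x]) (length (xs @ [x])) = radix_base (xs @ [x]) (length xs) * x"
    by (simp add: rb_Suc)
  also have "radix_base (xs @ [x]) (length xs) = radix_base xs (length xs)"
    unfolding radix_base_def by (intro prod.cong) (auto simp: nth_append)
  finally show ?case using snoc by simp
qed

lemma ps_prime: "x \<in> set (primes_sorted M) \<Longrightarrow> prime x"
  unfolding primes_sorted_def by auto

lemma ps_prod: "M > 0 \<Longrightarrow> prod_list (primes_sorted M) = M"
  unfolding primes_sorted_def by (metis prod_mset_prod_list mset_sorted_list_of_multiset prod_mset_prime_factorization_nat)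

lemma digit_low:
  assumes pos: "\<forall>x\<in>set ms. x > 0" and jt: "j < t" and tl: "t \<le> length ms"
  shows "digit ms (a + radix_base ms t * w) j = digit ms a j"
proof -
  obtain R where R: "radix_base ms t = radix_base ms (Suc j) * R"
    using rb_dvd[of "Suc j" t ms] jt by (auto elim: dvdE)
  have Bp: "radix_base ms j > 0" using rb_pos[OF pos] jt tl by simp
  have "a + radix_base ms t * w = a + radix_base ms j * (ms ! j * R * w)"
    by (simp add: R rb_Suc mult.assoc)
  hence "(a + radix_base ms t * w) div radix_base ms j = a div radix_base ms j + ms ! j * (R * w)"
    using Bp by (simp only: mult.assoc[symmetric] div_mult_self2[OF gr_implies_not0[OF Bp]]) (simp add: mult.assoc)
  thus ?thesis unfolding digit_def by simp
qed

lemma digit_mid: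
  assumes pos: "\<forall>x\<in>set ms. x > 0" and tl: "t < length ms"
    and a: "a < radix_base ms t" and u: "u < ms ! t"
  shows "digit ms (a + radix_base ms t * (u + ms ! t * c)) t = u"
proof -
  have Bp: "radix_base ms t > 0" using rb_pos[OF pos] tl by simp
  have "(a + radix_base ms t * (u + ms ! t * c)) div radix_base ms t = u + ms ! t * c"
    using Bp a by simp
  thus ?thesis unfolding digit_def using u by simp
qed

lemma digit_high:
  assumes pos: "\<forall>x\<in>set ms. x > 0" and tj: "t < j" and jl: "j < length ms"
    and a: "a < radix_base ms t" and u: "u < ms ! t"
  shows "digit ms (a + radix_base ms t * (u + ms ! t * c)) j = digit ms (radix_base ms t * (ms ! t * c)) j"
proof -
  obtain R where R: "radix_base ms j = radix_base ms t * ms ! t * R"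
    using rb_dvd[of "Suc t" j ms] tj by (auto elim: dvdE simp: rb_Suc)
  have Bp: "radix_base ms t > 0" using rb_pos[OF pos] tj jl by simp
  have mp: "ms ! t > 0" using pos tj jl by simp
  have e1: "(a + radix_base ms t * (u + ms ! t * c)) div radix_base ms j = c div R"
    unfolding R div_mult2_eq using Bp a u mp by simp
  have e2: "(radix_base ms t * (ms ! t * c)) div radix_base ms j = c div R"
    unfolding R div_mult2_eq using Bp mp by simp
  show ?thesis unfolding digit_def e1 e2 ..
qed

lemma apv_split:
  assumes pos: "\<forall>x\<in>set ms. x > 0" and tl: "t < length ms"
    and a: "a < radix_base ms t" and u: "u < ms ! t"
  shows "apv ms d (a + radix_base ms t * (u + ms ! t * c)) =
     (\<Sum>j<t. real (digit ms a j) * d j) + real u * d t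
     + (\<Sum>j\<in>{Suc t..<length ms}. real (digit ms (radix_base ms t * (ms ! t * c)) j) * d j)"
proof -
  let ?m = "a + radix_base ms t * (u + ms ! t * c)"
  let ?f = "\<lambda>j. real (digit ms ?m j) * d j"
  have "apv ms d ?m = sum ?f {..<Suc t} + sum ?f {Suc t..<length ms}"
  proof -
    have "{..<length ms} = {..<Suc t} \<union> {Suc t..<length ms}" using tl by auto
    moreover have "sum ?f ({..<Suc t} \<union> {Suc t..<length ms}) = sum ?f {..<Suc t} + sum ?f {Suc t..<length ms}"
      by (rule sum.union_disjoint) auto
    ultimately show ?thesis unfolding apv_def by simp

  qed
  also have "sum ?f {..<Suc t} = (\<Sum>j<t. real (digit ms a j) * d j) + real u * d t"
    using digit_low[OF pos _ less_imp_le[OF tl]] digit_mid[OF pos tl a u] by simp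
  also have "sum ?f {Suc t..<length ms} = (\<Sum>j\<in>{Suc t..<length ms}. real (digit ms (radix_base ms t * (ms ! t * c)) j) * d j)"
    using digit_high[OF pos _ _ a u] by (intro sum.cong) auto
  finally show ?thesis .
qed

lemma sum_shift_block: fixes g :: "nat \<Rightarrow> 'a::comm_monoid_add"
  shows "sum g {q*X..<q*X+X} = (\<Sum>a<X. g (a + X*q))"
  using sum.shift_bounds_nat_ivl[of g 0 "X*q" X] by (simp add: atLeast0LessThan mult.commute add.commute)

lemma sum_group: fixes g :: "nat \<Rightarrow> 'a::comm_monoid_add" shows "(\<Sum>m<X*Y. g m) = (\<Sum>q<Y. \<Sum>a<X. g (a + X*q))"
proof -
  have "(\<Sum>m<X*Y. g m) = (\<Sum>q<Y. sum g {q*X..<q*X+X})"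
    using sum.nat_group[of g X Y] by (simp add: mult.commute)
  also have "\<dots> = (\<Sum>q<Y. \<Sum>a<X. g (a + X*q))" by (simp only: sum_shift_block)
  finally show ?thesis .
qed

lemma dlist_len: "length (dlist ms delta P lam dmin i) = i"
  by (induction i) (simp_all add: Let_def)

lemma dlist_nth: "j < i \<Longrightarrow> dlist ms delta P lam dmin i ! j = dvec ms delta P lam dmin j"
proof (induction i)
  case 0 thus ?case by simp
next
  case (Suc i)
  show ?case
  proof (cases "j < i")
    case True thus ?thesis using Suc by (simp add: Let_def nth_append dlist_len)
  next
    case False hence "j = i" using Suc by simp
    thus ?thesis by (simp add: dvec_def)
  qed
qed

lemma dvec_eq: "dvec ms delta P lam dmin t =
   (let S = (\<Sum>j<t. real (ms ! j - 1) * dvec ms delta P lam dmin j) + dmin in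
    if t < P
    then (real (LEAST rho::nat. (real rho + 1 / real (ms ! t)) * lam / delta t \<ge> S)
              + 1 / real (ms ! t)) * lam / delta t
    else S)"
proof -
  have e: "(\<Sum>j<t. real (ms ! j - 1) * dlist ms delta P lam dmin t ! j) =
     (\<Sum>j<t. real (ms ! j - 1) * dvec ms delta P lam dmin j)"
    by (intro sum.cong refl) (simp add: dlist_nth)
  have 1: "dvec ms delta P lam dmin t = (let S = (\<Sum>j<t. real (ms ! j - 1) * dlist ms delta P lam dmin t ! j) + dmin in
    if t < P
    then (real (LEAST rho::nat. (real rho + 1 / real (ms ! t)) * lam / delta t \<ge> S)
              + 1 / real (ms ! t)) * lam / delta t
    else S)" by (simp add: dvec_def Let_def nth_append dlist_len)
  show ?thesis unfolding 1 e ..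
qed

lemma dvec_ge:
  assumes "t < P \<Longrightarrow> delta t > 0" and "lam > 0"
  shows "dvec ms delta P lam dmin t \<ge> (\<Sum>j<t. real (ms ! j - 1) * dvec ms delta P lam dmin j) + dmin"
proof (cases "t < P")
  case False thus ?thesis by (simp add: dvec_eq[of ms delta P lam dmin t] Let_def)
next
  case True
  define S where "S = (\<Sum>j<t. real (ms ! j - 1) * dvec ms delta P lam dmin j) + dmin"
  have dp: "delta t > 0" using assms True by simp
  obtain n :: nat where n: "S * delta t / lam < real n" using reals_Archimedean2 by blast
  have "S \<le> (real n + 1 / real (ms ! t)) * lam / delta t"
  proof -
    have "S < real n * lam / delta t" using n dp assms(2) by (simp add: field_simps)
    moreover have "real n * lam / delta t \<le> (real n + 1 / real (ms ! t)) * lam / delta t"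
      using dp assms(2) by (intro divide_right_mono mult_right_mono) auto
    ultimately show ?thesis by simp
  qed
  hence "S \<le> (real (LEAST rho::nat. (real rho + 1 / real (ms ! t)) * lam / delta t \<ge> S)
              + 1 / real (ms ! t)) * lam / delta t"
    by (rule LeastI)
  thus ?thesis using True unfolding S_def by (simp add: dvec_eq[of ms delta P lam dmin t] Let_def)
qed

lemma dvec_form:
  assumes "t < P"
  shows "\<exists>rho::nat. dvec ms delta P lam dmin t = (real rho + 1 / real (ms ! t)) * lam / delta t"
  using assms by (simp add: dvec_eq[of ms delta P lam dmin t] Let_def)

lemma geo0:
  fixes m rho :: nat and th :: real
  assumes m: "m \<ge> 2" and th: "th = 2*pi*(real rho + 1/real m) \<or> th = -(2*pi*(real rho + 1/real m))"
  shows "(\<Sum>u<m. exp (\<i> * complex_of_real (real u * th))) = 0"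
proof -
  define z where "z = \<i> * complex_of_real th"
  have t: "exp (\<i> * complex_of_real (real u * th)) = exp z ^ u" for u
    unfolding z_def exp_of_nat_mult[symmetric] by (simp add: mult.commute mult.left_commute)
  have mz: "real m * th = 2*pi*(real m * real rho + 1) \<or> real m * th = -(2*pi*(real m * real rho + 1))"
    using th m by (auto simp: field_simps)
  have "exp z ^ m = exp (of_nat m * z)" by (simp add: exp_of_nat_mult)
  also have "\<dots> = 1"
  proof -
    have "Im (of_nat m * z) = real m * th" "Re (of_nat m * z) = 0" unfolding z_def by simp_all
    moreover have "\<exists>n::int. real m * th = of_int (2 * n) * pi"
      using mz
    proof
      assume "real m * th = 2*pi*(real m * real rho + 1)"
      thus ?thesis by (intro exI[of _ "int (m*rho + 1)"]) simp
    next
      assume "real m * th = -(2*pi*(real m * real rho + 1))"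
      thus ?thesis by (intro exI[of _ "- int (m*rho + 1)"]) (simp add: algebra_simps)
    qed
    ultimately show ?thesis by (simp only: exp_eq_1)
  qed
  finally have em: "exp z ^ m = 1" .
  have ne: "exp z \<noteq> 1"
  proof
    assume "exp z = 1"
    then obtain n :: int where n: "th = of_int (2 * n) * pi" unfolding z_def exp_eq_1 by auto
    have "pi * (real rho + 1/real m) = pi * of_int n \<or> pi * (real rho + 1/real m) = pi * (- of_int n)"
    proof -
      have e1: "real_of_int (2 * n) * pi = 2 * (pi * of_int n)" by simp
      have e2: "2 * pi * (real rho + 1/real m) = 2 * (pi * (real rho + 1/real m))" by simp
      from th[unfolded n e1 e2] show ?thesis
      proof (elim disjE)
        assume "2 * (pi * of_int n) = 2 * (pi * (real rho + 1/real m))"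
        thus ?thesis by (intro disjI1) linarith
      next
        assume "2 * (pi * of_int n) = - (2 * (pi * (real rho + 1/real m)))"
        thus ?thesis by (intro disjI2) linarith
      qed
    qed
    hence "real rho + 1/real m = of_int n \<or> real rho + 1/real m = - of_int n"
      by (metis mult_cancel_left pi_neq_zero)
    hence "1/real m = of_int n - real rho \<or> 1/real m = - of_int n - real rho" by auto
    then obtain k :: int where k: "1/real m = of_int k"
    proof
      assume "1/real m = of_int n - real rho" thus ?thesis using that[of "n - int rho"] by simp
    next
      assume "1/real m = - of_int n - real rho" thus ?thesis using that[of "- n - int rho"] by simp
    qed
    have "0 < 1/real m" "1/real m < 1" using m by auto
    hence "0 < k" "k < 1" unfolding k by simp_all
    thus False by simp
  qed
  show ?thesis unfolding t using ne em by (simp add: sum_gp_strict)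
qed

lemma hor_zero:
  fixes ms :: "nat list" and d :: "nat \<Rightarrow> real"
  assumes pr: "\<forall>x\<in>set ms. prime x" and prod: "prod_list ms = M" and tl: "t < length ms"
    and dt: "d t = (real rho + 1 / real (ms ! t)) * lam / \<bar>th\<bar>"
    and th: "th \<noteq> 0" and lam: "lam > 0"
  shows "(\<Sum>m<M. exp (\<i> * complex_of_real (2*pi/lam * apv ms d m * th))) = 0"
proof -
  have pos: "\<forall>x\<in>set ms. x > 0" using pr prime_gt_0_nat by blast
  define B where "B = radix_base ms t"
  define mt where "mt = ms ! t"
  have mt2: "mt \<ge> 2" unfolding mt_def using pr tl prime_ge_2_nat nth_mem by blast
  have "B * mt dvd M"
    using rb_dvd[of "Suc t" "length ms" ms] tl unfolding rb_len prod rb_Suc B_def mt_def by simp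
  then obtain C where "M = B * mt * C" by (elim dvdE)
  hence MC: "M = B * (mt * C)" by (simp add: mult.assoc)
  define g where "g m = exp (\<i> * complex_of_real (2*pi/lam * apv ms d m * th))" for m
  define kd where "kd = 2*pi/lam * th * d t"
  have kd: "kd = 2*pi*(real rho + 1/real mt) \<or> kd = -(2*pi*(real rho + 1/real mt))"
  proof (cases "th > 0")
    case True thus ?thesis using lam unfolding kd_def dt mt_def by (intro disjI1) (simp add: field_simps)
  next
    case False hence "th < 0" using th by simp
    thus ?thesis using lam unfolding kd_def dt mt_def by (intro disjI2) (simp add: field_simps)
  qed
  define P where "P a = (\<Sum>j<t. real (digit ms a j) * d j)" for a
  define Q where "Q c = (\<Sum>j\<in>{Suc t..<length ms}. real (digit ms (B * (mt * c)) j) * d j)" for c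
  have gsplit: "g (a + B * (u + mt * c)) = exp (\<i> * complex_of_real (2*pi/lam * th * (P a + Q c))) * exp (\<i> * complex_of_real (real u * kd))"
    if "a < B" "u < mt" for a u c
  proof -
    have "apv ms d (a + B * (u + mt * c)) = P a + real u * d t + Q c"
      using apv_split[OF pos tl, of a u d c] that unfolding P_def Q_def B_def mt_def by simp
    hence "2*pi/lam * apv ms d (a + B * (u + mt * c)) * th = 2*pi/lam * th * (P a + Q c) + real u * kd"
      unfolding kd_def by (simp add: algebra_simps add_divide_distrib)
    thus ?thesis unfolding g_def by (simp add: distrib_left exp_add)
  qed
  have inner: "(\<Sum>u<mt. \<Sum>a<B. g (a + B * (u + mt * c))) = 0" for c
  proof -
    have "(\<Sum>u<mt. \<Sum>a<B. g (a + B * (u + mt * c))) =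
       (\<Sum>u<mt. \<Sum>a<B. exp (\<i> * complex_of_real (2*pi/lam * th * (P a + Q c))) * exp (\<i> * complex_of_real (real u * kd)))"
      using gsplit by simp
    also have "\<dots> = (\<Sum>u<mt. exp (\<i> * complex_of_real (real u * kd))) * (\<Sum>a<B. exp (\<i> * complex_of_real (2*pi/lam * th * (P a + Q c))))"
      by (subst sum_product) (simp add: mult.commute)
    also have "(\<Sum>u<mt. exp (\<i> * complex_of_real (real u * kd))) = 0"
      using geo0[OF mt2 kd] .
    finally show ?thesis by simp
  qed
  have "(\<Sum>m<M. g m) = (\<Sum>w<mt*C. \<Sum>a<B. g (a + B * w))"
    unfolding MC by (rule sum_group)
  also have "\<dots> = (\<Sum>c<C. \<Sum>u<mt. \<Sum>a<B. g (a + B * (u + mt * c)))"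
    by (rule sum_group)
  also have "\<dots> = 0" using inner by simp
  finally show ?thesis unfolding g_def .
qed

lemma cexp_pair: "cnj (exp (- \<i> * complex_of_real a)) * exp (- \<i> * complex_of_real c) = exp (\<i> * complex_of_real (a - c))"
proof -
  have "cnj (exp (- \<i> * complex_of_real a)) = exp (\<i> * complex_of_real a)" by (simp add: exp_cnj)
  moreover have "exp (\<i> * complex_of_real a) * exp (- \<i> * complex_of_real c) = exp (\<i> * complex_of_real a + - \<i> * complex_of_real c)"
    by (rule exp_add[symmetric])
  moreover have "\<i> * complex_of_real a + - \<i> * complex_of_real c = \<i> * complex_of_real (a - c)"
    by (simp add: algebra_simps)
  ultimately show ?thesis by simp
qed

lemma dsum_prod: fixes c :: complex shows "(\<Sum>i\<in>A. \<Sum>j\<in>B. c * (E i * F j)) = c * sum E A * sum F B"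
proof -
  have "c * sum E A * sum F B = (\<Sum>i\<in>A. c * E i) * sum F B" by (simp add: sum_distrib_left)
  also have "\<dots> = (\<Sum>i\<in>A. \<Sum>j\<in>B. (c * E i) * F j)" by (rule sum_product)
  finally show ?thesis by (simp add: mult.assoc)
qed

lemma cinner_chan:
  "cinner M N (chan lam bk thk phk x y) (chan lam bq thq phq x y) =
   cnj bk * bq * (\<Sum>m<M. exp (\<i> * complex_of_real (2*pi/lam * x m * (thk - thq))))
     * (\<Sum>n<N. exp (\<i> * complex_of_real (2*pi/lam * y n * (phk - phq))))"
proof -
  have t: "cnj (chan lam bk thk phk x y (m, n)) * chan lam bq thq phq x y (m, n) =
      cnj bk * bq * (exp (\<i> * complex_of_real (2*pi/lam * x m * (thk - thq)))
        * exp (\<i> * complex_of_real (2*pi/lam * y n * (phk - phq))))" for m n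
  proof -
    have "cnj (chan lam bk thk phk x y (m, n)) * chan lam bq thq phq x y (m, n) =
      cnj bk * bq * ((cnj (exp (- \<i> * complex_of_real (2 * pi / lam * x m * thk))) * exp (- \<i> * complex_of_real (2 * pi / lam * x m * thq)))
       * (cnj (exp (- \<i> * complex_of_real (2 * pi / lam * y n * phk))) * exp (- \<i> * complex_of_real (2 * pi / lam * y n * phq))))"
      unfolding chan_def by (simp only: prod.case complex_cnj_mult) (simp only: mult_ac)
    also have "\<dots> = cnj bk * bq * (exp (\<i> * complex_of_real (2*pi/lam * x m * (thk - thq)))
        * exp (\<i> * complex_of_real (2*pi/lam * y n * (phk - phq))))"
      unfolding cexp_pair by (simp add: right_diff_distrib)
    finally show ?thesis .
  qed
  show ?thesis unfolding cinner_def t by (rule dsum_prod)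
qed

lemma cnormsq_chan: "cnormsq M N (chan lam b th ph x y) = real M * real N * (cmod b)\<^sup>2"
proof -
  have "cmod (chan lam b th ph x y (m, n)) = cmod b" for m n
    unfolding chan_def by (simp add: norm_mult norm_exp_eq_Re)
  thus ?thesis unfolding cnormsq_def by simp
qed

lemma cinner_self: "cinner M N (chan lam b th ph x y) (chan lam b th ph x y) = complex_of_real (real M * real N * (cmod b)\<^sup>2)"
proof -
  have "b * cnj b = (complex_of_real (cmod b))\<^sup>2" by (metis complex_norm_square of_real_power)
  thus ?thesis unfolding cinner_chan by (simp add: mult.commute)
qed

lemma cs_cinner: "(cmod (cinner M N w h))\<^sup>2 \<le> cnormsq M N w * cnormsq M N h"
proof -
  let ?I = "{..<M} \<times> {..<N}"
  have "cmod (cinner M N w h) \<le> (\<Sum>m<M. \<Sum>n<N. cmod (w (m,n)) * cmod (h (m,n)))"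
    unfolding cinner_def
    by (rule order_trans[OF norm_sum sum_mono], rule order_trans[OF norm_sum sum_mono]) (simp add: norm_mult)
  also have "\<dots> = (\<Sum>(m,n)\<in>?I. cmod (w (m,n)) * cmod (h (m,n)))"
    by (simp add: sum.cartesian_product)
  finally have 1: "cmod (cinner M N w h) \<le> (\<Sum>(m,n)\<in>?I. cmod (w (m,n)) * cmod (h (m,n)))" .
  have "(cmod (cinner M N w h))\<^sup>2 \<le> (\<Sum>(m,n)\<in>?I. cmod (w (m,n)) * cmod (h (m,n)))\<^sup>2"
    using 1 by (intro power_mono) auto
  also have "\<dots> \<le> (\<Sum>i\<in>?I. (cmod (w i))\<^sup>2) * (\<Sum>i\<in>?I. (cmod (h i))\<^sup>2)"
    using Cauchy_Schwarz_ineq_sum[of "\<lambda>i. cmod (w i)" "\<lambda>i. cmod (h i)" ?I] by (simp add: case_prod_beta')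
  also have "\<dots> = cnormsq M N w * cnormsq M N h"
    unfolding cnormsq_def by (simp add: sum.cartesian_product case_prod_beta')
  finally show ?thesis .
qed

lemma allmax:
  assumes pos: "\<forall>x\<in>set ms. x > 0" and k: "k \<le> length ms"
    and mx: "\<forall>j<k. digit ms m j = ms ! j - 1"
  shows "m mod radix_base ms k = radix_base ms k - 1"
  using k mx
proof (induction k)
  case 0 thus ?case by (simp add: radix_base_def)
next
  case (Suc k)
  have Bp: "radix_base ms k \<ge> 1" using rb_pos[OF pos, of k] Suc by simp
  have mp: "ms ! k \<ge> 1" using pos Suc by (simp add: Suc_le_eq)
  have IH: "m mod radix_base ms k = radix_base ms k - 1" using Suc by simp
  have dk: "m div radix_base ms k mod ms ! k = ms ! k - 1" using Suc.prems unfolding digit_def by simp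
  have "m mod radix_base ms (Suc k) = radix_base ms k * (m div radix_base ms k mod ms ! k) + m mod radix_base ms k"
    unfolding rb_Suc by (rule mod_mult2_eq)
  also have "\<dots> = radix_base ms k * (ms ! k - 1) + (radix_base ms k - 1)" using IH dk by simp
  also have "\<dots> = radix_base ms k * ms ! k - 1" using Bp mp by (simp add: diff_mult_distrib2)
  finally show ?case by (simp add: rb_Suc)
qed

lemma spacing:
  fixes d :: "nat \<Rightarrow> real"
  assumes pos: "\<forall>x\<in>set ms. x > 0" and prod: "prod_list ms = M"
    and dge: "\<forall>t<length ms. d t \<ge> (\<Sum>j<t. real (ms ! j - 1) * d j) + dmin"
    and m: "Suc m < M"
  shows "apv ms d (Suc m) - apv ms d m \<ge> dmin"
proof -
  have ex: "\<exists>j. j < length ms \<and> digit ms m j \<noteq> ms ! j - 1"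
  proof (rule ccontr)
    assume "\<not> ?thesis"
    hence "m mod radix_base ms (length ms) = radix_base ms (length ms) - 1"
      using allmax[OF pos le_refl] by blast
    hence "m mod M = M - 1" unfolding rb_len prod .
    thus False using m by simp
  qed
  define t where "t = (LEAST j. j < length ms \<and> digit ms m j \<noteq> ms ! j - 1)"
  have t: "t < length ms" "digit ms m t \<noteq> ms ! t - 1"
    using LeastI_ex[OF ex] unfolding t_def by auto
  have lowmax: "\<forall>j<t. digit ms m j = ms ! j - 1"
    using not_less_Least t(1) unfolding t_def by force
  define B where "B = radix_base ms t"
  define mt where "mt = ms ! t"
  have Bp: "B > 0" unfolding B_def using rb_pos[OF pos] t by simp
  have mtp: "mt > 0" unfolding mt_def using pos t by simp
  define a where "a = m mod B"
  define u where "u = m div B mod mt"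
  define c where "c = m div B div mt"
  have a: "a = B - 1" unfolding a_def B_def using allmax[OF pos _ lowmax] t by simp
  have u: "u + 1 < mt" using t(2) unfolding u_def mt_def B_def digit_def
    by (metis Suc_eq_plus1 Suc_lessI diff_Suc_1 mod_less_divisor gr_implies_not0 mt_def mtp neq0_conv)
  have meq: "m = a + B * (u + mt * c)" unfolding a_def u_def c_def
    by (metis mod_mult_div_eq add.commute mult.commute)
  have m1: "Suc m = 0 + B * ((u + 1) + mt * c)" using meq a Bp by (simp add: algebra_simps)
  have alt: "a < B" using a Bp by simp
  have e1: "apv ms d m = (\<Sum>j<t. real (digit ms a j) * d j) + real u * d t
     + (\<Sum>j\<in>{Suc t..<length ms}. real (digit ms (B * (mt * c)) j) * d j)"
    using apv_split[OF pos t(1), of a u d c] alt u meq unfolding B_def mt_def by simp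
  have e2: "apv ms d (Suc m) = (\<Sum>j<t. real (digit ms 0 j) * d j) + real (u+1) * d t
     + (\<Sum>j\<in>{Suc t..<length ms}. real (digit ms (B * (mt * c)) j) * d j)"
    using apv_split[OF pos t(1), of 0 "u+1" d c] Bp u m1 unfolding B_def mt_def by simp
  have z: "digit ms 0 j = 0" for j unfolding digit_def by simp
  have dla: "digit ms a j = ms ! j - 1" if "j < t" for j
  proof -
    have "digit ms a j = digit ms (a + B * (u + mt * c)) j"
      using digit_low[OF pos that less_imp_le[OF t(1)], where a=a and w="u + mt*c"] unfolding B_def by simp
    thus ?thesis using meq lowmax that by simp
  qed
  have "apv ms d (Suc m) - apv ms d m = d t - (\<Sum>j<t. real (ms ! j - 1) * d j)"
    unfolding e1 e2 z using dla by (simp add: algebra_simps)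
  moreover have "d t \<ge> (\<Sum>j<t. real (ms ! j - 1) * d j) + dmin" using dge t(1) by blast
  ultimately show ?thesis by linarith
qed

lemma lb_real:
  fixes A C I Q s p g r :: real
  assumes "A \<ge> 0" "C \<ge> 0" "I \<ge> 0" "Q > 0" "s > 0" "p \<ge> 0" "A \<le> C * Q"
    and g: "g = A * p / (I + C * s)" and r: "r \<le> g"
  shows "s * r / Q \<le> p"
proof -
  have gs: "g * s \<le> Q * p"
  proof (cases "C = 0")
    case True
    hence "A = 0" using assms by simp
    thus ?thesis using g assms by simp
  next
    case False
    hence Cp: "C > 0" using assms by simp
    have D: "I + C * s \<ge> C * s" "C * s > 0" using assms Cp by auto
    have "g * s = (A * p * s) / (I + C * s)" using g by simp
    also have "\<dots> \<le> (A * p * s) / (C * s)"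
      using D assms by (intro divide_left_mono) (auto intro: mult_nonneg_nonneg)
    also have "\<dots> = A * p / C" using assms Cp by (simp add: field_simps)
    also have "\<dots> \<le> C * Q * p / C" using assms Cp by (intro divide_right_mono mult_right_mono) auto
    also have "\<dots> = Q * p" using Cp by simp
    finally show ?thesis .
  qed
  have "s * r / Q \<le> s * g / Q" using r assms by (intro divide_right_mono mult_left_mono) auto
  also have "\<dots> \<le> p" using gs assms(4) by (simp add: pos_divide_le_eq mult.commute)
  finally show ?thesis .
qed

theorem theorem3:
  fixes M N K :: nat and lam sigma2 dminx dminy :: real
    and b :: "nat \<Rightarrow> complex" and th ph r :: "nat \<Rightarrow> real"
    and ps1 ps2 :: "(nat \<times> nat) list"
  assumes "M \<ge> 1" and "N \<ge> 1"
    and "lam > 0" and "sigma2 > 0" and "dminx > 0" and "dminy > 0"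
    and "\<forall>k<K. b k \<noteq> 0"
    and "\<forall>k<K. -1 \<le> th k \<and> th k \<le> 1 \<and> -1 \<le> ph k \<and> ph k \<le> 1"
    and "\<forall>k<K. \<forall>q<K. k \<noteq> q \<longrightarrow> th k \<noteq> th q \<and> ph k \<noteq> ph q"
    and "\<forall>k<K. r k \<ge> 0"
    and "K * (K - 1) div 2 \<le> length (primes_sorted M) + length (primes_sorted N)"
    and "distinct ps1" and "distinct ps2" and "set ps1 \<inter> set ps2 = {}"
    and "set ps1 \<union> set ps2 = {(k, q). k < q \<and> q < K}"
    and "length ps1 \<le> length (primes_sorted M)"
    and "length ps2 \<le> length (primes_sorted N)"
  shows "\<exists>W p.
     let xs = apv (primes_sorted M)
                (dvec (primes_sorted M) (\<lambda>i. \<bar>th (fst (ps1 ! i)) - th (snd (ps1 ! i))\<bar>)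
                      (length ps1) lam dminx);
         ys = apv (primes_sorted N)
                (dvec (primes_sorted N) (\<lambda>i. \<bar>ph (fst (ps2 ! i)) - ph (snd (ps2 ! i))\<bar>)
                      (length ps2) lam dminy)
     in feasible M N K lam b th ph sigma2 r dminx dminy xs ys W p
        \<and> (\<forall>x y W' p'. feasible M N K lam b th ph sigma2 r dminx dminy x y W' p'
               \<longrightarrow> (\<Sum>k<K. p k) \<le> (\<Sum>k<K. p' k))
        \<and> (\<Sum>k<K. p k) = (\<Sum>k<K. sigma2 * (2 powr r k - 1) / (real M * real N * (cmod (b k))\<^sup>2))"
proof -
  define ms1 where "ms1 = primes_sorted M"
  define ms2 where "ms2 = primes_sorted N"
  define del1 where "del1 = (\<lambda>i. \<bar>th (fst (ps1 ! i)) - th (snd (ps1 ! i))\<bar>)"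
  define del2 where "del2 = (\<lambda>i. \<bar>ph (fst (ps2 ! i)) - ph (snd (ps2 ! i))\<bar>)"
  define d1 where "d1 = dvec ms1 del1 (length ps1) lam dminx"
  define d2 where "d2 = dvec ms2 del2 (length ps2) lam dminy"
  define xs where "xs = apv ms1 d1"
  define ys where "ys = apv ms2 d2"
  define W where "W = (\<lambda>k. chan lam (b k) (th k) (ph k) xs ys)"
  define p where "p = (\<lambda>k. sigma2 * (2 powr r k - 1) / (real M * real N * (cmod (b k))\<^sup>2))"
  have xs_eq: "apv (primes_sorted M) (dvec (primes_sorted M) (\<lambda>i. \<bar>th (fst (ps1 ! i)) - th (snd (ps1 ! i))\<bar>) (length ps1) lam dminx) = xs"
    unfolding xs_def d1_def del1_def ms1_def ..
  have ys_eq: "apv (primes_sorted N) (dvec (primes_sorted N) (\<lambda>i. \<bar>ph (fst (ps2 ! i)) - ph (snd (ps2 ! i))\<bar>) (length ps2) lam dminy) = ys"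
    unfolding ys_def d2_def del2_def ms2_def ..
  have pr1: "\<forall>x\<in>set ms1. prime x" and pr2: "\<forall>x\<in>set ms2. prime x"
    unfolding ms1_def ms2_def using ps_prime by auto
  have pos1: "\<forall>x\<in>set ms1. x > 0" and pos2: "\<forall>x\<in>set ms2. x > 0"
    using pr1 pr2 prime_gt_0_nat by auto
  have prod1: "prod_list ms1 = M" and prod2: "prod_list ms2 = N"
    unfolding ms1_def ms2_def using ps_prod assms(1,2) by auto
  have pair1: "fst (ps1 ! i) < snd (ps1 ! i) \<and> snd (ps1 ! i) < K" if "i < length ps1" for i
  proof -
    have "ps1 ! i \<in> set ps1 \<union> set ps2" using nth_mem[OF that] by simp
    hence "ps1 ! i \<in> {(k, q). k < q \<and> q < K}" unfolding assms(15) .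
    thus ?thesis by (cases "ps1 ! i") auto
  qed
  have pair2: "fst (ps2 ! i) < snd (ps2 ! i) \<and> snd (ps2 ! i) < K" if "i < length ps2" for i
  proof -
    have "ps2 ! i \<in> set ps1 \<union> set ps2" using nth_mem[OF that] by simp
    hence "ps2 ! i \<in> {(k, q). k < q \<and> q < K}" unfolding assms(15) .
    thus ?thesis by (cases "ps2 ! i") auto
  qed
  have delpos1: "del1 i > 0" if "i < length ps1" for i
  proof -
    obtain a c where ac: "a = fst (ps1 ! i)" "c = snd (ps1 ! i)" by blast
    have "a < c" "c < K" using pair1[OF that] unfolding ac by auto
    hence "a < K" by simp
    hence "th a \<noteq> th c" using assms(9) \<open>a < K\<close> \<open>c < K\<close> \<open>a < c\<close> by auto
    thus ?thesis unfolding del1_def ac[symmetric] by simp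
  qed
  have delpos2: "del2 i > 0" if "i < length ps2" for i
  proof -
    obtain a c where ac: "a = fst (ps2 ! i)" "c = snd (ps2 ! i)" by blast
    have "a < c" "c < K" using pair2[OF that] unfolding ac by auto
    hence "a < K" by simp
    hence "ph a \<noteq> ph c" using assms(9) \<open>a < K\<close> \<open>c < K\<close> \<open>a < c\<close> by auto
    thus ?thesis unfolding del2_def ac[symmetric] by simp
  qed
  have dge1: "\<forall>t<length ms1. d1 t \<ge> (\<Sum>j<t. real (ms1 ! j - 1) * d1 j) + dminx"
    unfolding d1_def
  proof (intro allI impI)
    fix t assume "t < length ms1"
    show "dvec ms1 del1 (length ps1) lam dminx t \<ge> (\<Sum>j<t. real (ms1 ! j - 1) * dvec ms1 del1 (length ps1) lam dminx j) + dminx"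
      by (rule dvec_ge[OF delpos1 assms(3)])
  qed
  have dge2: "\<forall>t<length ms2. d2 t \<ge> (\<Sum>j<t. real (ms2 ! j - 1) * d2 j) + dminy"
    unfolding d2_def
  proof (intro allI impI)
    fix t assume "t < length ms2"
    show "dvec ms2 del2 (length ps2) lam dminy t \<ge> (\<Sum>j<t. real (ms2 ! j - 1) * dvec ms2 del2 (length ps2) lam dminy j) + dminy"
      by (rule dvec_ge[OF delpos2 assms(3)])
  qed
  have spx: "\<forall>m. Suc m < M \<longrightarrow> xs (Suc m) - xs m \<ge> dminx"
    unfolding xs_def using spacing[OF pos1 prod1 dge1] by blast
  have spy: "\<forall>n. Suc n < N \<longrightarrow> ys (Suc n) - ys n \<ge> dminy"
    unfolding ys_def using spacing[OF pos2 prod2 dge2] by blast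
  have hz: "(\<Sum>m<M. exp (\<i> * complex_of_real (2*pi/lam * xs m * (th k - th q)))) = 0
          \<or> (\<Sum>n<N. exp (\<i> * complex_of_real (2*pi/lam * ys n * (ph k - ph q)))) = 0"
    if kq: "k < K" "q < K" "k \<noteq> q" for k q
  proof -
    have "(min k q, max k q) \<in> set ps1 \<union> set ps2" using assms(15) kq by auto
    thus ?thesis
    proof
      assume "(min k q, max k q) \<in> set ps1"
      then obtain i where i: "i < length ps1" "ps1 ! i = (min k q, max k q)" by (auto simp: in_set_conv_nth)
      have del: "del1 i = \<bar>th k - th q\<bar>" 
      proof (cases "k < q")
        case True thus ?thesis unfolding del1_def i(2) by (simp add: min_def max_def)
      next
        case False thus ?thesis unfolding del1_def i(2) by (simp add: min_def max_def abs_minus_commute)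
      qed
      obtain rho :: nat where rho: "d1 i = (real rho + 1 / real (ms1 ! i)) * lam / del1 i"
        using dvec_form[OF i(1)] unfolding d1_def by blast
      have il: "i < length ms1" using i(1) assms(16) unfolding ms1_def by simp
      have "th k - th q \<noteq> 0" using assms(9) kq by auto
      from hor_zero[where d=d1 and th="th k - th q", OF pr1 prod1 il rho[unfolded del] this assms(3)]
      show ?thesis unfolding xs_def by simp
    next
      assume "(min k q, max k q) \<in> set ps2"
      then obtain i where i: "i < length ps2" "ps2 ! i = (min k q, max k q)" by (auto simp: in_set_conv_nth)
      have del: "del2 i = \<bar>ph k - ph q\<bar>" 
      proof (cases "k < q")
        case True thus ?thesis unfolding del2_def i(2) by (simp add: min_def max_def)
      next
        case False thus ?thesis unfolding del2_def i(2) by (simp add: min_def max_def abs_minus_commute)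
      qed
      obtain rho :: nat where rho: "d2 i = (real rho + 1 / real (ms2 ! i)) * lam / del2 i"
        using dvec_form[OF i(1)] unfolding d2_def by blast
      have il: "i < length ms2" using i(1) assms(17) unfolding ms2_def by simp
      have "ph k - ph q \<noteq> 0" using assms(9) kq by auto
      from hor_zero[where d=d2 and th="ph k - ph q", OF pr2 prod2 il rho[unfolded del] this assms(3)]
      show ?thesis unfolding ys_def by simp
    qed
  qed
  have orth: "cinner M N (W k) (chan lam (b q) (th q) (ph q) xs ys) = 0"
    if "k < K" "q < K" "k \<noteq> q" for k q
  proof -
    have "cinner M N (W k) (chan lam (b q) (th q) (ph q) xs ys) =
      cnj (b k) * b q * (\<Sum>m<M. exp (\<i> * complex_of_real (2*pi/lam * xs m * (th k - th q))))
       * (\<Sum>n<N. exp (\<i> * complex_of_real (2*pi/lam * ys n * (ph k - ph q))))"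
      unfolding W_def by (rule cinner_chan)
    with hz[OF that] show ?thesis by (elim disjE) (simp_all only: mult_zero_left mult_zero_right)
  qed
  have Qpos: "real M * real N * (cmod (b k))\<^sup>2 > 0" if "k < K" for k
    using assms(1,2,7) that by auto
  have sinr_eq: "sinr M N K lam b th ph sigma2 xs ys W p k = 2 powr r k - 1" if k: "k < K" for k
  proof -
    define Q where "Q = real M * real N * (cmod (b k))\<^sup>2"
    have Q: "Q > 0" using Qpos[OF k] unfolding Q_def .
    have i0: "(\<Sum>q\<in>{..<K} - {k}. (cmod (cinner M N (W k) (chan lam (b q) (th q) (ph q) xs ys)))\<^sup>2 * p q) = 0"
      using orth[OF k] by (intro sum.neutral) auto
    have c1: "cmod (cinner M N (W k) (chan lam (b k) (th k) (ph k) xs ys)) = Q"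
      unfolding W_def cinner_self norm_of_real Q_def by simp
    have c2: "cnormsq M N (W k) = Q" unfolding W_def cnormsq_chan Q_def ..
    have "sinr M N K lam b th ph sigma2 xs ys W p k = Q\<^sup>2 * p k / (Q * sigma2)"
      unfolding sinr_def i0 c1 c2 by simp
    also have "\<dots> = Q * p k / sigma2" using Q by (simp add: power2_eq_square)
    also have "\<dots> = 2 powr r k - 1" unfolding p_def Q_def[symmetric] using Q assms(4) by simp
    finally show ?thesis .
  qed
  have feas: "feasible M N K lam b th ph sigma2 r dminx dminy xs ys W p"
    unfolding feasible_def
  proof (intro conjI allI impI)
    fix k assume k: "k < K"
    have "2 powr r k \<ge> 1" using assms(10) k by (intro ge_one_powr_ge_zero) auto
    thus "p k \<ge> 0" unfolding p_def using Qpos[OF k] assms(4) by (intro divide_nonneg_pos) auto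
    show "log 2 (1 + sinr M N K lam b th ph sigma2 xs ys W p k) \<ge> r k"
      unfolding sinr_eq[OF k] by simp
  qed (use spx spy in auto)
  have lower: "p k \<le> p' k" if f: "feasible M N K lam b th ph sigma2 r dminx dminy x y W' p'" and k: "k < K"
    for x y W' p' k
  proof -
    define h where "h = chan lam (b k) (th k) (ph k) x y"
    define Q where "Q = real M * real N * (cmod (b k))\<^sup>2"
    define A where "A = (cmod (cinner M N (W' k) h))\<^sup>2"
    define C where "C = cnormsq M N (W' k)"
    define I where "I = (\<Sum>q\<in>{..<K} - {k}. (cmod (cinner M N (W' k) (chan lam (b q) (th q) (ph q) x y)))\<^sup>2 * p' q)"
    define g where "g = sinr M N K lam b th ph sigma2 x y W' p' k"
    have Q: "Q > 0" using Qpos[OF k] unfolding Q_def .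
    have pnn: "\<forall>q<K. p' q \<ge> 0" using f unfolding feasible_def by blast
    have I0: "I \<ge> 0" unfolding I_def using pnn by (intro sum_nonneg) auto
    have C0: "C \<ge> 0" unfolding C_def cnormsq_def by (intro sum_nonneg) auto
    have ACQ: "A \<le> C * Q" unfolding A_def C_def Q_def h_def
      using cs_cinner[of M N "W' k" "chan lam (b k) (th k) (ph k) x y"] unfolding cnormsq_chan .
    have g: "g = A * p' k / (I + C * sigma2)"
      unfolding g_def sinr_def A_def I_def C_def h_def ..
    have g0: "g \<ge> 0" unfolding g A_def using I0 C0 pnn k assms(4) by (intro divide_nonneg_nonneg mult_nonneg_nonneg) auto
    have lg: "r k \<le> log 2 (1 + g)" using f k unfolding feasible_def g_def by blast
    have "2 powr r k \<le> 2 powr (log 2 (1 + g))" using lg by simp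
    also have "\<dots> = 1 + g" using g0 by simp
    finally have rg: "2 powr r k - 1 \<le> g" by simp
    have "sigma2 * (2 powr r k - 1) / Q \<le> p' k"
      by (rule lb_real[OF _ C0 I0 Q assms(4) _ ACQ g rg]) (auto simp: A_def pnn k)
    thus ?thesis unfolding p_def Q_def .
  qed
  show ?thesis unfolding Let_def xs_eq ys_eq
  proof (intro exI[of _ W] exI[of _ p] conjI allI impI feas)
    fix x y W' p' assume "feasible M N K lam b th ph sigma2 r dminx dminy x y W' p'"
    thus "(\<Sum>k<K. p k) \<le> (\<Sum>k<K. p' k)" using lower by (intro sum_mono) auto
  qed (simp add: p_def)
qed

end
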